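(* Let $l_n,R_n>0$ ($n\in\mathbb N$) satisfy $l_n,R_n\to\infty$, $l_n^2/n\to0$, $n/R_n\to0$, $e^{-\pi l_n/2}R_n\to0$, and let $W_n(z)=\exp\!\big(-l_n\pi-il_n\log\frac{z-n}{z+n}\big)$ for $z\in\mathbb C_+$. Then $W_n(z)\to1$ as $n\to\infty$ uniformly on each compact set $K\subset\mathbb C_+$.
   Context: $\mathbb C_+=\{\operatorname{Im}z>0\}$. For $z\in\mathbb C_+$ one has $\frac{z-n}{z+n}\in\mathbb C_+$, and $\log$ denotes the branch with imaginary part in $(0,\pi)$. *)

theory Defs
  imports "HOL-Analysis.Analysis"
begin

(* For z in the upper half plane, (z-n)/(z+n) lies in the upper half plane, where the
   principal logarithm Ln has imaginary part in (0,pi); so Ln is the branch of the paper. *)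
definition W :: "(nat \<Rightarrow> real) \<Rightarrow> nat \<Rightarrow> complex \<Rightarrow> complex" where
  "W l n z = exp (- complex_of_real (l n * pi)
                  - \<i> * complex_of_real (l n) * Ln ((z - of_nat n) / (z + of_nat n)))"

end

theory Submission
  imports Defs "HOL-Complex_Analysis.Weierstrass_Factorization"
begin

lemma key:
  fixes z :: complex and L M :: real and n :: nat
  assumes z: "Im z > 0" and zM: "norm z \<le> M" and nM: "8 * M \<le> real n" and n: "n > 0"
    and L: "L \<ge> 0" and small: "8 * M * L / real n \<le> 1/2"
  shows "norm (exp (- complex_of_real (L * pi)
                  - \<i> * complex_of_real L * Ln ((z - of_nat n) / (z + of_nat n))) - 1)
         \<le> 12 * M * L / real n"
proof -
  have M0: "M \<ge> 0" using zM norm_ge_zero order_trans by blast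
  have nz: "z + of_nat n \<noteq> 0" proof
    assume "z + of_nat n = 0"
    hence "Im (z + of_nat n) = 0" by simp
    thus False using z by simp
  qed
  define u where "u = (of_nat n - z) / (of_nat n + z)"
  define v where "v = u - 1"
  have w: "(z - of_nat n) / (z + of_nat n) = - u"
    unfolding u_def by (simp add: add.commute minus_divide_left)
  have u0: "u \<noteq> 0" unfolding u_def
  proof
    assume "(of_nat n - z) / (of_nat n + z) = 0"
    hence "of_nat n - z = 0" using nz by (simp add: add.commute)
    hence "Im (of_nat n - z) = 0" by simp
    thus False using z by simp
  qed
  have Imu: "Im u < 0"
  proof -
    have pos: "(real n + Re z)\<^sup>2 + (Im z)\<^sup>2 > 0" using z by (simp add: add_nonneg_pos)
    have "Im u = (- Im z * (real n + Re z) - (real n - Re z) * Im z) / ((real n + Re z)\<^sup>2 + (Im z)\<^sup>2)"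
      unfolding u_def by (simp add: Im_divide)
    also have "\<dots> = - (2 * real n * Im z) / ((real n + Re z)\<^sup>2 + (Im z)\<^sup>2)" by (simp add: algebra_simps)
    finally show ?thesis using z n pos by (simp add: divide_neg_pos)
  qed
  have Lnw: "Ln (- u) = Ln u + \<i> * pi" using Ln_minus[OF u0] Imu by auto
  have ev: "exp (- complex_of_real (L * pi) - \<i> * complex_of_real L * Ln (- u))
       = exp (- (\<i> * complex_of_real L * Ln u))"
    unfolding Lnw by (simp add: algebra_simps)
  have vdef: "v = - 2 * z / (of_nat n + z)" unfolding v_def u_def using nz
    by (simp add: field_simps add.commute)
  have den: "cmod (of_nat n + z) \<ge> real n / 2"
  proof -
    have "cmod (of_nat n + z) \<ge> cmod (of_nat n :: complex) - cmod z" by (rule norm_diff_ineq)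
    then show ?thesis using zM nM M0 by simp
  qed
  have nv: "cmod v \<le> 4 * M / real n"
  proof -
    have "cmod v = 2 * cmod z / cmod (of_nat n + z)" unfolding vdef by (simp add: norm_divide)
    also have "\<dots> \<le> 2 * M / (real n / 2)"
      using zM den n M0 by (intro frac_le) auto
    finally show ?thesis by simp
  qed
  have nv2: "cmod v \<le> 1/2"
  proof -
    have "4 * M / real n \<le> 1/2" using nM n by (simp add: field_simps)
    thus ?thesis using nv by linarith
  qed
  have "cmod (Ln (1 + v) - v) \<le> (cmod v)^2 / (1 - cmod v)"
    using nv2 by (intro Ln_approx_linear) auto
  also have "\<dots> \<le> cmod v"
  proof -
    have "(cmod v)^2 \<le> cmod v * (1 - cmod v)" using nv2 by (simp add: power2_eq_square mult_left_mono)
    thus ?thesis using nv2 by (simp add: field_simps)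
  qed
  finally have "cmod (Ln u) \<le> 2 * cmod v" unfolding v_def using norm_triangle_ineq4[of "Ln u - (u - 1)" "u - 1"]
    by (smt (verit, best) add.commute diff_add_cancel norm_triangle_ineq2)
  hence lnu: "cmod (Ln u) \<le> 8 * M / real n" using nv by linarith
  define a where "a = - (\<i> * complex_of_real L * Ln u)"
  have na: "cmod a \<le> 8 * M * L / real n"
  proof -
    have "cmod a = L * cmod (Ln u)" unfolding a_def using L by (simp add: norm_mult)
    also have "\<dots> \<le> L * (8 * M / real n)" using lnu L by (intro mult_left_mono) auto
    finally show ?thesis by (simp add: mult.commute mult.left_commute)
  qed
  have "cmod (exp a - 1) \<le> 3/2 * cmod a" using na small by (intro norm_exp_bounds) auto
  also have "\<dots> \<le> 3/2 * (8 * M * L / real n)" using na by (rule mult_left_mono) auto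
  finally show ?thesis using w ev a_def by (simp add: mult.commute mult.left_commute)
qed

theorem lemma3:
  fixes l R :: "nat \<Rightarrow> real"
  assumes l_pos: "\<And>n. l n > 0" and R_pos: "\<And>n. R n > 0"
    and l_inf: "filterlim l at_top sequentially"
    and R_inf: "filterlim R at_top sequentially"
    and l2n: "(\<lambda>n. (l n)\<^sup>2 / real n) \<longlonglongrightarrow> 0"
    and nR: "(\<lambda>n. real n / R n) \<longlonglongrightarrow> 0"
    and expR: "(\<lambda>n. exp (- pi * l n / 2) * R n) \<longlonglongrightarrow> 0"
  shows "\<forall>K. compact K \<and> K \<subseteq> {z. Im z > 0} \<longrightarrow>
           uniform_limit K (\<lambda>n z. W l n z) (\<lambda>z. 1) sequentially"
proof (intro allI impI)
  fix K :: "complex set" assume K: "compact K \<and> K \<subseteq> {z. Im z > 0}"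
  obtain M0 where M0: "\<And>z. z \<in> K \<Longrightarrow> norm z \<le> M0"
    using K compact_imp_bounded bounded_iff by metis
  define M where "M = max M0 1"
  have M: "\<And>z. z \<in> K \<Longrightarrow> norm z \<le> M" "M \<ge> 1" using M0 unfolding M_def by force+
  have ln0: "(\<lambda>n. l n / real n) \<longlonglongrightarrow> 0"
  proof -
    have "(\<lambda>n. (l n)\<^sup>2 / real n * inverse (l n)) \<longlonglongrightarrow> 0 * 0"
      by (intro tendsto_mult l2n tendsto_inverse_0_at_top l_inf)
    moreover have "(\<lambda>n. (l n)\<^sup>2 / real n * inverse (l n)) = (\<lambda>n. l n / real n)"
      using l_pos by (auto simp: power2_eq_square field_simps intro!: ext)
    ultimately show ?thesis by simp
  qed
  show "uniform_limit K (\<lambda>n z. W l n z) (\<lambda>z. 1) sequentially"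
  proof (rule uniform_limitI)
    fix e :: real assume e: "e > 0"
    define d where "d = min (1 / (16 * M)) (e / (24 * M))"
    have d: "d > 0" using e M(2) unfolding d_def by auto
    have ev1: "\<forall>\<^sub>F n in sequentially. norm (l n / real n) < d"
      using ln0 d by (auto simp: tendsto_iff)
    have ev2: "\<forall>\<^sub>F n in sequentially. 8 * M \<le> real n \<and> n > 0"
      using eventually_ge_at_top[of "nat \<lceil>8 * M\<rceil> + 1"] by eventually_elim linarith
    show "\<forall>\<^sub>F n in sequentially. \<forall>x\<in>K. dist (W l n x) 1 < e"
      using ev1 ev2
    proof eventually_elim
      case (elim n)
      have q: "l n / real n < d" using elim l_pos[of n] by simp
      have s1: "8 * M * l n / real n \<le> 1/2"
      proof -
        have "8 * M * l n / real n = 8 * M * (l n / real n)" by simp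
        also have "\<dots> \<le> 8 * M * (1 / (16 * M))" using q M(2) unfolding d_def
          by (intro mult_left_mono) auto
        finally show ?thesis using M(2) by simp
      qed
      have s2: "12 * M * l n / real n < e"
      proof -
        have "12 * M * l n / real n = 12 * M * (l n / real n)" by simp
        also have "\<dots> < 12 * M * (e / (24 * M))" using q M(2) unfolding d_def
          by (intro mult_strict_left_mono) auto
        finally show ?thesis using M(2) e by simp
      qed
      show ?case
      proof
        fix x assume x: "x \<in> K"
        have "norm (W l n x - 1) \<le> 12 * M * l n / real n"
          unfolding W_def using K x M(1)[OF x] elim s1 l_pos[of n]
          by (intro key) auto
        thus "dist (W l n x) 1 < e" using s2 by (simp add: dist_norm)
      qed
    qed
  qed
qed

end
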